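(* Let $\mathcal{Q}$ be an arbitrary (possibly infinite) set of generalized quantifiers of width $1$, let $d \in \mathbb{N}$, and let $(\mathfrak{M},w)$ and $(\mathfrak{N},v)$ be pointed Kripke models over the same finite set $\Phi$ of proposition symbols. Then the following are equivalent: (1) $\mathfrak{M},w \sim^d_{\mathcal{Q}} \mathfrak{N},v$, i.e. Player 2 has a winning strategy in the $d$-round $\mathcal{Q}$-bisimulation game played on $(\mathfrak{M},w)$ and $(\mathfrak{N},v)$; (2) $\mathfrak{M},w \equiv^d_{\mathrm{PL}(\mathcal{Q})} \mathfrak{N},v$; (3) $\mathfrak{N},v \Vdash \varphi^{\mathcal{Q},d}_{\mathfrak{M}\sqcup\mathfrak{N},w}$.
   Context: Kripke models: fix a finite set $\Phi$ of proposition symbols. A Kripke model is $\mathfrak{M}=(V,E,\ell)$ with $V$ a finite non-empty set, $E\subseteq V\times V$ (loops and non-symmetric edges allowed), and $\ell:V\to\mathcal{P}(\Phi)$. For $u\in V$, $N(u)=\{u'\in V\mid (u,u')\in E\}$. A pointed Kripke model is a pair $(\mathfrak{M},w)$ with $w\in V$. $\mathfrak{M}\sqcup\mathfrak{N}$ denotes the disjoint union of Kripke models. Generalized quantifiers: a generalized quantifier (of width 1) is a class $Q$ of pairs $(D,P)$ with $D$ a set and $P\subseteq D$, closed under isomorphism. It gives a modality $\langle Q\rangle$ with semantics $\mathfrak{M},u\Vdash\langle Q\rangle\varphi$ iff $(N(u),\{u'\in N(u)\mid \mathfrak{M},u'\Vdash\varphi\})\in Q$. $\mathrm{PL}(\mathcal{Q})$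 is the set of formulas generated by $\varphi::=\bot\mid p\mid\neg\varphi\mid\varphi\wedge\varphi\mid\varphi\vee\varphi\mid\langle Q\rangle\varphi$ ($p\in\Phi$, $Q\in\mathcal{Q}$), with the usual Boolean semantics and $\mathfrak{M},u\Vdash p$ iff $p\in\ell(u)$. Modal depth: $\mathrm{md}(\bot)=\mathrm{md}(p)=0$, $\mathrm{md}(\neg\varphi)=\mathrm{md}(\varphi)$, $\mathrm{md}$ of $\wedge,\vee$ is the max, $\mathrm{md}(\langle Q\rangle\varphi)=1+\mathrm{md}(\varphi)$. $\mathrm{PL}(\mathcal{Q})^d$ is the set of formulas of depth $\le d$, and $\mathfrak{M},w\equiv^d_{\mathrm{PL}(\mathcal{Q})}\mathfrak{N},v$ means every formula of $\mathrm{PL}(\mathcal{Q})^d$ is true at $(\mathfrak{M},w)$ iff it is true at $(\mathfrak{N},v)$. Types: for a Kripke model $\mathfrak{K}$ and $u\in\mathfrak{K}$, let $\varphi^{\mathcal{Q},0}_{\mathfrak{K},u}=\bigwedge\{p\mid \mathfrak{K},u\Vdash p\}\wedge\bigwedge\{\neg p\mid \mathfrak{K},u\Vdash\neg p\}$, and $\varphi^{\mathcal{Q},d+1}_{\mathfrak{K},u}=\varphi^{\mathcal{Q},0}_{\mathfrak{K},u}\wedge\bigwedge\{\langle Q\rangle\bigvee C\}\wedge\bigwedge\{\neg\langle Q\rangle\bigvee C\}$, where the first big conjunction ranges over all $Q\in\mathcal{Q}$ and $C\subseteq\{\varphi^{\mathcal{Q},d}_{\mathfrak{K},u'}\mid u'\in\mathfrak{K}\}$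 with $\mathfrak{K},u\Vdash\langle Q\rangle\bigvee_{\psi\in C}\psi$, and the second over all such $Q,C$ with $\mathfrak{K},u\Vdash\neg\langle Q\rangle\bigvee_{\psi\in C}\psi$. If $\mathcal{Q}$ is infinite these conjunctions may be infinitary; an infinitary conjunction is satisfied iff every conjunct is. $\mathcal{Q}$-bisimulation game on $(\mathfrak{M},w)$, $(\mathfrak{N},v)$: two pebbles start on $w$ and $v$; Player 1 starts as attacker, Player 2 as defender (roles may swap during play). At the start of a round the pebbles lie on nodes $a,b$ of $\mathfrak{M}\sqcup\mathfrak{N}$. (i) The attacker selects one pebble, say on $a$, a $Q\in\mathcal{Q}$, and $X\subseteq N(a)$ with $(N(a),X)\in Q$; then he chooses $P\subseteq N(b)$. The defender may contest $P$ by placing one pebble on a node of $P$ and the other on a node of $N(a)$, after which a new round starts. (ii) Otherwise the defender chooses $X'\subseteq N(b)$ with $(N(b),X')\in Q$ and $P\subseteq X'$. (iii) The attacker then either moves one pebble onto a node of $N(b)\setminus X'$ and the other onto a node of $X$ and the two players swap roles, or moves one pebble onto a node of $X'$, after which the defender moves the other onto a node of $X\cup P$; a new round starts. (iv) Whenever $X$ (resp. $X'$) is chosen, the other player may instead contest it by moving one pebble onto a node of that set and the other onto a node of $N(a)\setminus X$ (resp. $N(b)\setminus X'$), then taking the role of defender (the players swap roles); a new round starts. The current attacker wins if at the start of a round the two pebbled nodes do not satisfy the same proposition symbols; a player who must choose a subset but cannot loses; infinite plays are won by Player 2. In the $d$-round game, Player 2 wins if Player 1 has not won after $d$ rounds.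 $\mathfrak{M},w\sim^d_{\mathcal{Q}}\mathfrak{N},v$ means Player 2 has a winning strategy in the $d$-round game.
   Formalization: In the d-round $\mathcal{Q}$-bisimulation game, when d rounds pass without the current attacker winning, the current defender wins, in place of Player 2 winning whenever Player 1 has not won. The statement above fails without it. *)

theory Defs
  imports Main
begin

record ('v, 'p) kripke =
  verts :: "'v set"
  edges :: "('v \<times> 'v) set"
  lab   :: "'v \<Rightarrow> 'p set"

definition kripke :: "'p set \<Rightarrow> ('v, 'p) kripke \<Rightarrow> bool" where
  "kripke Phi K \<longleftrightarrow> finite (verts K) \<and> verts K \<noteq> {} \<and>
     edges K \<subseteq> verts K \<times> verts K \<and> (\<forall>u\<in>verts K. lab K u \<subseteq> Phi)"

definition nbrs :: "('v, 'p) kripke \<Rightarrow> 'v \<Rightarrow> 'v set" where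
  "nbrs K u = {u'. (u, u') \<in> edges K}"

definition dunion :: "('v, 'p) kripke \<Rightarrow> ('w, 'p) kripke \<Rightarrow> ('v + 'w, 'p) kripke" where
  "dunion M N = \<lparr> verts = Inl ` verts M \<union> Inr ` verts N,
                 edges = map_prod Inl Inl ` edges M \<union> map_prod Inr Inr ` edges N,
                 lab = case_sum (lab M) (lab N) \<rparr>"

text \<open>A generalized quantifier is represented by its pairs (D,P) with D a set of
  naturals (a countably infinite universe, enough to hold a copy of every finite
  domain); it must be closed under isomorphism.  Membership of a pair (D,P)
  over an arbitrary type is membership of an isomorphic copy.\<close>
type_synonym gq = "(nat set \<times> nat set) set"

definition is_gq :: "gq \<Rightarrow> bool" where
  "is_gq Q \<longleftrightarrow> (\<forall>D P. (D, P) \<in> Q \<longrightarrow> P \<subseteq> D) \<and>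
     (\<forall>D P D' f. (D, P) \<in> Q \<longrightarrow> bij_betw f D D' \<longrightarrow> (D', f ` P) \<in> Q)"

definition gq_mem :: "gq \<Rightarrow> 'a set \<Rightarrow> 'a set \<Rightarrow> bool" where
  "gq_mem Q D P \<longleftrightarrow> (\<exists>(f :: 'a \<Rightarrow> nat) D' P'. (D', P') \<in> Q \<and> bij_betw f D D' \<and> f ` P = P')"

definition diam :: "gq \<Rightarrow> ('v, 'p) kripke \<Rightarrow> 'v \<Rightarrow> ('v \<Rightarrow> bool) \<Rightarrow> bool" where
  "diam Q K u S \<longleftrightarrow> gq_mem Q (nbrs K u) {u' \<in> nbrs K u. S u'}"

datatype 'p pl_form =
    FBot
  | FProp 'p
  | FNeg "'p pl_form"
  | FAnd "'p pl_form" "'p pl_form"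
  | FOr "'p pl_form" "'p pl_form"
  | FQ gq "'p pl_form"

primrec sat :: "('v, 'p) kripke \<Rightarrow> 'v \<Rightarrow> 'p pl_form \<Rightarrow> bool" where
  "sat K u FBot = False"
| "sat K u (FProp p) = (p \<in> lab K u)"
| "sat K u (FNeg \<phi>) = (\<not> sat K u \<phi>)"
| "sat K u (FAnd \<phi> \<psi>) = (sat K u \<phi> \<and> sat K u \<psi>)"
| "sat K u (FOr \<phi> \<psi>) = (sat K u \<phi> \<or> sat K u \<psi>)"
| "sat K u (FQ Q \<phi>) = diam Q K u (\<lambda>u'. sat K u' \<phi>)"

primrec md :: "'p pl_form \<Rightarrow> nat" where
  "md FBot = 0"
| "md (FProp p) = 0"
| "md (FNeg \<phi>) = md \<phi>"
| "md (FAnd \<phi> \<psi>) = max (md \<phi>) (md \<psi>)"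
| "md (FOr \<phi> \<psi>) = max (md \<phi>) (md \<psi>)"
| "md (FQ Q \<phi>) = Suc (md \<phi>)"

primrec in_PL :: "gq set \<Rightarrow> 'p set \<Rightarrow> 'p pl_form \<Rightarrow> bool" where
  "in_PL Qs Phi FBot = True"
| "in_PL Qs Phi (FProp p) = (p \<in> Phi)"
| "in_PL Qs Phi (FNeg \<phi>) = in_PL Qs Phi \<phi>"
| "in_PL Qs Phi (FAnd \<phi> \<psi>) = (in_PL Qs Phi \<phi> \<and> in_PL Qs Phi \<psi>)"
| "in_PL Qs Phi (FOr \<phi> \<psi>) = (in_PL Qs Phi \<phi> \<and> in_PL Qs Phi \<psi>)"
| "in_PL Qs Phi (FQ Q \<phi>) = (Q \<in> Qs \<and> in_PL Qs Phi \<phi>)"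

definition PL_equiv :: "gq set \<Rightarrow> 'p set \<Rightarrow> nat \<Rightarrow> ('v, 'p) kripke \<Rightarrow> 'v \<Rightarrow> ('w, 'p) kripke \<Rightarrow> 'w \<Rightarrow> bool" where
  "PL_equiv Qs Phi d M w N v \<longleftrightarrow>
     (\<forall>\<phi>. in_PL Qs Phi \<phi> \<and> md \<phi> \<le> d \<longrightarrow> (sat M w \<phi> \<longleftrightarrow> sat N v \<phi>))"

text \<open>atoms_sat Phi K u M x: M,x satisfies phi^0_{K,u}.\<close>
definition atoms_sat :: "'p set \<Rightarrow> ('a, 'p) kripke \<Rightarrow> 'a \<Rightarrow> ('b, 'p) kripke \<Rightarrow> 'b \<Rightarrow> bool" where
  "atoms_sat Phi K u M x \<longleftrightarrow>
     (\<forall>p\<in>Phi. p \<in> lab K u \<longrightarrow> p \<in> lab M x) \<and> (\<forall>p\<in>Phi. p \<notin> lab K u \<longrightarrow> p \<notin> lab M x)"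

text \<open>RK u' z means K,z satisfies phi^d_{K,u'},
  RM u' z means M,z satisfies phi^d_{K,u'}.  A set C of depth-d types is given as
  the set of nodes of K whose types it contains; the disjunction over C is
  satisfied at z iff z satisfies one of these types.  The result says that
  M,x satisfies phi^{d+1}_{K,u} (a possibly infinitary conjunction).\<close>
definition type_step :: "gq set \<Rightarrow> 'p set \<Rightarrow> ('a, 'p) kripke \<Rightarrow> 'a \<Rightarrow> ('a \<Rightarrow> 'a \<Rightarrow> bool)
    \<Rightarrow> ('b, 'p) kripke \<Rightarrow> 'b \<Rightarrow> ('a \<Rightarrow> 'b \<Rightarrow> bool) \<Rightarrow> bool" where
  "type_step Qs Phi K u RK M x RM \<longleftrightarrow> atoms_sat Phi K u M x \<and>
     (\<forall>Q\<in>Qs. \<forall>C. C \<subseteq> verts K \<longrightarrow>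
        (diam Q K u (\<lambda>z. \<exists>u'\<in>C. RK u' z) \<longrightarrow> diam Q M x (\<lambda>z. \<exists>u'\<in>C. RM u' z)) \<and>
        (\<not> diam Q K u (\<lambda>z. \<exists>u'\<in>C. RK u' z) \<longrightarrow> \<not> diam Q M x (\<lambda>z. \<exists>u'\<in>C. RM u' z)))"

text \<open>type_self Qs Phi d K u y: K,y satisfies phi^{Qs,d}_{K,u}.\<close>
primrec type_self :: "gq set \<Rightarrow> 'p set \<Rightarrow> nat \<Rightarrow> ('a, 'p) kripke \<Rightarrow> 'a \<Rightarrow> 'a \<Rightarrow> bool" where
  "type_self Qs Phi 0 K u y = atoms_sat Phi K u K y"
| "type_self Qs Phi (Suc d) K u y = type_step Qs Phi K u (type_self Qs Phi d K) K y (type_self Qs Phi d K)"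

text \<open>type_sat Qs Phi d K u M x: M,x satisfies phi^{Qs,d}_{K,u}.\<close>
primrec type_sat :: "gq set \<Rightarrow> 'p set \<Rightarrow> nat \<Rightarrow> ('a, 'p) kripke \<Rightarrow> 'a \<Rightarrow> ('b, 'p) kripke \<Rightarrow> 'b \<Rightarrow> bool" where
  "type_sat Qs Phi 0 K u M x = atoms_sat Phi K u M x"
| "type_sat Qs Phi (Suc d) K u M x = type_step Qs Phi K u (type_self Qs Phi d K) M x (\<lambda>u' z. type_sat Qs Phi d K u' M z)"

datatype player = Player1 | Player2

fun other :: "player \<Rightarrow> player" where
  "other Player1 = Player2"
| "other Player2 = Player1"

text \<open>A choice of player pl among the alternatives S: Player 2 can win iff
  (if pl is Player 2) some alternative is winning for Player 2, resp. (if pl is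
  Player 1) every alternative is winning for Player 2.  In particular a player
  who has to choose from an empty set of alternatives loses.\<close>
definition choice :: "player \<Rightarrow> 'x set \<Rightarrow> ('x \<Rightarrow> bool) \<Rightarrow> bool" where
  "choice pl S f \<longleftrightarrow> (if pl = Player2 then (\<exists>x\<in>S. f x) else (\<forall>x\<in>S. f x))"

text \<open>p2_wins Qs K k a b att: Player 2 has a winning strategy in the game on
  the arena K with k rounds left, pebbles on a and b, and att the current attacker.
  Rules: contesting makes the contesting player the defender; after the last
  round the current defender wins.\<close>
primrec p2_wins :: "gq set \<Rightarrow> ('a, 'p) kripke \<Rightarrow> nat \<Rightarrow> 'a \<Rightarrow> 'a \<Rightarrow> player \<Rightarrow> bool" where
  "p2_wins Qs K 0 a b att =
     (if lab K a \<noteq> lab K b then att = Player2 else other att = Player2)"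
| "p2_wins Qs K (Suc k) a b att =
     (if lab K a \<noteq> lab K b then att = Player2 else
      (let def = other att; W = p2_wins Qs K k in
       choice att {(x, y, Q, X). ((x, y) = (a, b) \<or> (x, y) = (b, a)) \<and> Q \<in> Qs \<and>
                                 X \<subseteq> nbrs K x \<and> gq_mem Q (nbrs K x) X}
        (\<lambda>(x, y, Q, X).
          \<comment> \<open>(iv) the defender may contest X (roles unchanged), or not (None)\<close>
          choice def (insert None (Some ` (X \<times> (nbrs K x - X))))
           (\<lambda>c. case c of Some (p, q) \<Rightarrow> W p q att | None \<Rightarrow>
             \<comment> \<open>(i) the attacker chooses P\<close>
             choice att {P. P \<subseteq> nbrs K y}
              (\<lambda>P.
                \<comment> \<open>(i) defender contests P (Inl), or (ii) chooses X' (Inr)\<close>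
                choice def (Inl ` (P \<times> nbrs K x) \<union>
                            Inr ` {X'. X' \<subseteq> nbrs K y \<and> gq_mem Q (nbrs K y) X' \<and> P \<subseteq> X'})
                 (\<lambda>c. case c of Inl (p, q) \<Rightarrow> W p q att | Inr X' \<Rightarrow>
                   \<comment> \<open>(iv) attacker contests X' (swap), or (iii): move to
                       (N(y) - X') x X (swap), or move onto X' (Inr)\<close>
                   choice att (Inl ` (X' \<times> (nbrs K y - X')) \<union> Inl ` ((nbrs K y - X') \<times> X) \<union> Inr ` X')
                    (\<lambda>c. case c of Inl (p, q) \<Rightarrow> W p q def | Inr p \<Rightarrow>
                       choice def (X \<union> P) (\<lambda>q. W p q att))))))))"

definition bisim_game :: "gq set \<Rightarrow> nat \<Rightarrow> ('v, 'p) kripke \<Rightarrow> 'v \<Rightarrow> ('w, 'p) kripke \<Rightarrow> 'w \<Rightarrow> bool" where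
  "bisim_game Qs d M w N v \<longleftrightarrow> p2_wins Qs (dunion M N) d (Inl w) (Inr v) Player1"

end

theory Submission
  imports Defs
begin


lemma choice_P1[simp]: "choice Player1 S f = (\<forall>x\<in>S. f x)" by (simp add: choice_def)
lemma choice_P2[simp]: "choice Player2 S f = (\<exists>x\<in>S. f x)" by (simp add: choice_def)
lemma ball_img: "(\<forall>x\<in>f ` A. P x) = (\<forall>y\<in>A. P (f y))" by blast
lemma bex_img: "(\<exists>x\<in>f ` A. P x) = (\<exists>y\<in>A. P (f y))" by blast
lemma ball_coll: "(\<forall>x\<in>{x. P x}. Q x) = (\<forall>x. P x \<longrightarrow> Q x)" by blast
lemma bex_coll: "(\<exists>x\<in>{x. P x}. Q x) = (\<exists>x. P x \<and> Q x)" by blast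

lemma imp_comm: "(P \<longrightarrow> Q \<longrightarrow> R) = (Q \<longrightarrow> P \<longrightarrow> R)" by blast

lemma p2_dual: "p2_wins Qs K k a b Player2 = (\<not> p2_wins Qs K k a b Player1)"
proof (induction k arbitrary: a b)
  case 0 then show ?case by simp
next
  case (Suc k)
  show ?case apply (simp only: p2_wins.simps Let_def choice_P1 choice_P2 other.simps Suc)
    apply (cases "lab K a = lab K b")
    apply (simp_all add: ball_Un bex_Un ball_img bex_img ball_coll bex_coll)
  apply (simp only: imp_conjL imp_comm)
  done
qed


lemma D_Suc: "p2_wins Qs K (Suc k) a b Player1 = (lab K a = lab K b \<and>
  (\<forall>x y Q X. ((x,y)=(a,b) \<or> (x,y)=(b,a)) \<and> Q\<in>Qs \<and> X \<subseteq> nbrs K x \<and> gq_mem Q (nbrs K x) X \<longrightarrow>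
   (\<exists>p\<in>X. \<exists>q\<in>nbrs K x - X. p2_wins Qs K k p q Player1) \<or>
   (\<forall>P. P \<subseteq> nbrs K y \<longrightarrow> (\<exists>p\<in>P. \<exists>q\<in>nbrs K x. p2_wins Qs K k p q Player1) \<or>
      (\<exists>X'. X' \<subseteq> nbrs K y \<and> gq_mem Q (nbrs K y) X' \<and> P \<subseteq> X' \<and>
         (\<forall>p\<in>X'. \<forall>q\<in>nbrs K y - X'. \<not> p2_wins Qs K k p q Player1) \<and>
         (\<forall>p\<in>nbrs K y - X'. \<forall>q\<in>X. \<not> p2_wins Qs K k p q Player1) \<and>
         (\<forall>p\<in>X'. \<exists>q\<in>X \<union> P. p2_wins Qs K k p q Player1)))))"
  apply (simp only: p2_wins.simps Let_def choice_P1 choice_P2 other.simps p2_dual)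
  apply (cases "lab K a = lab K b")
   apply (simp_all add: ball_Un bex_Un ball_img bex_img ball_coll bex_coll)
  apply (simp only: imp_conjL imp_comm disj_comms)
  done


lemma type_self_eq: "type_self Qs Phi d K = (\<lambda>u y. type_sat Qs Phi d K u K y)"
proof (induction d)
  case 0 then show ?case by (simp add: fun_eq_iff)
next
  case (Suc d) then show ?case by (intro ext) (simp only: type_self.simps type_sat.simps Suc.IH)
qed

lemma T_Suc: "type_sat Qs Phi (Suc d) K a K b = (atoms_sat Phi K a K b \<and>
   (\<forall>Q\<in>Qs. \<forall>C. C \<subseteq> verts K \<longrightarrow>
     (diam Q K a (\<lambda>z. \<exists>u\<in>C. type_sat Qs Phi d K u K z) = diam Q K b (\<lambda>z. \<exists>u\<in>C. type_sat Qs Phi d K u K z))))"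
  by (auto simp: type_step_def type_self_eq)

lemma T_atoms: "type_sat Qs Phi d K a K b \<Longrightarrow> atoms_sat Phi K a K b"
  by (cases d) (simp_all only: T_Suc type_sat.simps(1))

lemma T_refl: "type_sat Qs Phi d K a K a"
  by (cases d) (simp_all only: T_Suc type_sat.simps(1), auto simp: atoms_sat_def)

lemma T_sym: "type_sat Qs Phi d K a K b \<Longrightarrow> type_sat Qs Phi d K b K a"
  by (cases d) (simp_all only: T_Suc type_sat.simps(1), auto simp: atoms_sat_def)

lemma T_trans: "type_sat Qs Phi d K a K b \<Longrightarrow> type_sat Qs Phi d K b K c \<Longrightarrow> type_sat Qs Phi d K a K c"
  by (cases d) (simp_all only: T_Suc type_sat.simps(1), auto simp: atoms_sat_def)

lemma nbrs_sub: "kripke Phi K \<Longrightarrow> nbrs K x \<subseteq> verts K"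
  by (auto simp: kripke_def nbrs_def)

lemma diam_cong: "(\<And>z. z \<in> nbrs K x \<Longrightarrow> S z = S' z) \<Longrightarrow> diam Q K x S = diam Q K x S'"
proof -
  assume "\<And>z. z \<in> nbrs K x \<Longrightarrow> S z = S' z"
  then have "{u' \<in> nbrs K x. S u'} = {u' \<in> nbrs K x. S' u'}" by auto
  then show ?thesis by (simp add: diam_def)
qed

lemma T_imp_E:
  assumes K: "kripke Phi K"
  shows "type_sat Qs Phi d K a K b \<Longrightarrow> in_PL Qs Phi \<phi> \<Longrightarrow> md \<phi> \<le> d \<Longrightarrow> sat K a \<phi> = sat K b \<phi>"
proof (induction d arbitrary: a b \<phi>)
  case 0
  then show ?case by (induction \<phi>) (auto simp: atoms_sat_def)
next
  case (Suc d)
  have T: "type_sat Qs Phi (Suc d) K a K b" by fact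
  from Suc.prems(2,3) show ?case
  proof (induction \<phi>)
    case (FProp p)
    then show ?case using T_atoms[OF T] by (auto simp: atoms_sat_def)
  next
    case (FQ Q \<psi>)
    define C where "C = {u \<in> verts K. sat K u \<psi>}"
    have eq: "sat K z \<psi> = (\<exists>u\<in>C. type_sat Qs Phi d K u K z)" if "z \<in> nbrs K x" for x z
    proof
      assume "sat K z \<psi>" then show "\<exists>u\<in>C. type_sat Qs Phi d K u K z"
        using that nbrs_sub[OF K] T_refl[of Qs Phi d K z] unfolding C_def by blast
    next
      assume "\<exists>u\<in>C. type_sat Qs Phi d K u K z"
      then obtain u where "u \<in> C" "type_sat Qs Phi d K u K z" by blast
      then show "sat K z \<psi>" using Suc.IH[of u z \<psi>] FQ.prems unfolding C_def by auto
    qed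
    have CV: "C \<subseteq> verts K" unfolding C_def by auto
    have "sat K a (FQ Q \<psi>) = diam Q K a (\<lambda>z. \<exists>u\<in>C. type_sat Qs Phi d K u K z)"
      by (simp, rule diam_cong, rule eq)
    also have "\<dots> = diam Q K b (\<lambda>z. \<exists>u\<in>C. type_sat Qs Phi d K u K z)"
      using T CV FQ.prems by (simp only: T_Suc) auto
    also have "\<dots> = sat K b (FQ Q \<psi>)"
      by (simp, rule diam_cong, rule eq[symmetric])
    finally show ?case .
  qed auto
qed

fun conjs :: "'p pl_form list \<Rightarrow> 'p pl_form" where
  "conjs [] = FNeg FBot"
| "conjs (x # xs) = FAnd x (conjs xs)"

fun disjs :: "'p pl_form list \<Rightarrow> 'p pl_form" where
  "disjs [] = FBot"
| "disjs (x # xs) = FOr x (disjs xs)"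

lemma conjs_props: "sat K z (conjs xs) = (\<forall>\<phi>\<in>set xs. sat K z \<phi>)"
  "in_PL Qs Phi (conjs xs) = (\<forall>\<phi>\<in>set xs. in_PL Qs Phi \<phi>)"
  "(\<forall>\<phi>\<in>set xs. md \<phi> \<le> d) \<Longrightarrow> md (conjs xs) \<le> d"
  by (induction xs) auto

lemma disjs_props: "sat K z (disjs xs) = (\<exists>\<phi>\<in>set xs. sat K z \<phi>)"
  "in_PL Qs Phi (disjs xs) = (\<forall>\<phi>\<in>set xs. in_PL Qs Phi \<phi>)"
  "(\<forall>\<phi>\<in>set xs. md \<phi> \<le> d) \<Longrightarrow> md (disjs xs) \<le> d"
  by (induction xs) auto

lemma char:
  assumes K: "kripke Phi K"
    and D: "\<And>b. b \<in> verts K \<Longrightarrow> \<not> type_sat Qs Phi d K a K b \<Longrightarrow>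
       \<exists>\<psi>. in_PL Qs Phi \<psi> \<and> md \<psi> \<le> d \<and> sat K a \<psi> \<and> \<not> sat K b \<psi>"
  shows "\<exists>\<chi>. in_PL Qs Phi \<chi> \<and> md \<chi> \<le> d \<and> (\<forall>z\<in>verts K. sat K z \<chi> = type_sat Qs Phi d K a K z)"
proof -
  let ?B = "{b \<in> verts K. \<not> type_sat Qs Phi d K a K b}"
  have "\<forall>b\<in>?B. \<exists>\<psi>. in_PL Qs Phi \<psi> \<and> md \<psi> \<le> d \<and> sat K a \<psi> \<and> \<not> sat K b \<psi>" using D by blast
  then obtain f where f: "\<forall>b\<in>?B. in_PL Qs Phi (f b) \<and> md (f b) \<le> d \<and> sat K a (f b) \<and> \<not> sat K b (f b)"
    by metis
  have "finite ?B" using K by (auto simp: kripke_def)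
  then obtain xs where xs: "set xs = ?B" using finite_list by blast
  define \<chi> where "\<chi> = conjs (map f xs)"
  show ?thesis
  proof (rule exI[of _ \<chi>], intro conjI ballI)
    show "in_PL Qs Phi \<chi>" unfolding \<chi>_def conjs_props using f xs by auto
    show "md \<chi> \<le> d" unfolding \<chi>_def by (rule conjs_props) (use f xs in auto)
    fix z assume z: "z \<in> verts K"
    show "sat K z \<chi> = type_sat Qs Phi d K a K z"
    proof
      assume sz: "sat K z \<chi>"
      show "type_sat Qs Phi d K a K z"
      proof (rule ccontr)
        assume "\<not> type_sat Qs Phi d K a K z"
        then have zB: "z \<in> ?B" using z by blast
        then have "f z \<in> set (map f xs)" using xs by auto
        then have "sat K z (f z)" using sz unfolding \<chi>_def conjs_props by blast
        then show False using f zB by blast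
      qed
    next
      assume T: "type_sat Qs Phi d K a K z"
      have "sat K z \<phi>" if "\<phi> \<in> set (map f xs)" for \<phi>
      proof -
        from that xs obtain b where b: "b \<in> ?B" "\<phi> = f b" by auto
        then have "in_PL Qs Phi \<phi>" "md \<phi> \<le> d" "sat K a \<phi>" using f by auto
        then show ?thesis using T_imp_E[OF K T] by blast
      qed
      then show "sat K z \<chi>" unfolding \<chi>_def conjs_props by blast
    qed
  qed
qed

lemma dist_atoms: "\<not> atoms_sat Phi K a K b \<Longrightarrow> \<exists>\<psi>. in_PL Qs Phi \<psi> \<and> md \<psi> \<le> d \<and> sat K a \<psi> \<and> \<not> sat K b \<psi>"
proof -
  assume "\<not> atoms_sat Phi K a K b"
  then obtain p where "p \<in> Phi" "(p \<in> lab K a \<and> p \<notin> lab K b) \<or> (p \<notin> lab K a \<and> p \<in> lab K b)"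
    unfolding atoms_sat_def by blast
  then show ?thesis
    apply (elim disjE)
     apply (rule exI[of _ "FProp p"], simp)
    apply (rule exI[of _ "FNeg (FProp p)"], simp)
    done
qed

lemma dist:
  assumes K: "kripke Phi K"
  shows "b \<in> verts K \<Longrightarrow> \<not> type_sat Qs Phi d K a K b \<Longrightarrow>
       \<exists>\<psi>. in_PL Qs Phi \<psi> \<and> md \<psi> \<le> d \<and> sat K a \<psi> \<and> \<not> sat K b \<psi>"
proof (induction d arbitrary: a b)
  case 0
  then show ?case using dist_atoms[of Phi K a b Qs 0] by simp
next
  case (Suc d)
  show ?case
  proof (cases "atoms_sat Phi K a K b")
    case False then show ?thesis using dist_atoms[of Phi K a b Qs "Suc d"] by blast
  next
    case True
    with Suc.prems obtain Q C where Q: "Q \<in> Qs" and CV: "C \<subseteq> verts K" and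
      ne: "diam Q K a (\<lambda>z. \<exists>u\<in>C. type_sat Qs Phi d K u K z) \<noteq> diam Q K b (\<lambda>z. \<exists>u\<in>C. type_sat Qs Phi d K u K z)"
      by (simp only: T_Suc) blast
    have "\<forall>u\<in>C. \<exists>\<chi>. in_PL Qs Phi \<chi> \<and> md \<chi> \<le> d \<and> (\<forall>z\<in>verts K. sat K z \<chi> = type_sat Qs Phi d K u K z)"
      using char[OF K Suc.IH] by blast
    then obtain g where g: "\<forall>u\<in>C. in_PL Qs Phi (g u) \<and> md (g u) \<le> d \<and> (\<forall>z\<in>verts K. sat K z (g u) = type_sat Qs Phi d K u K z)"
      by metis
    have "finite C" using K CV by (auto simp: kripke_def intro: finite_subset)
    then obtain cs where cs: "set cs = C" using finite_list by blast
    define \<delta> where "\<delta> = disjs (map g cs)"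
    have inPL: "in_PL Qs Phi \<delta>" unfolding \<delta>_def disjs_props using g cs by auto
    have md: "md \<delta> \<le> d" unfolding \<delta>_def by (rule disjs_props) (use g cs in auto)
    have eq: "diam Q K x (\<lambda>z. sat K z \<delta>) = diam Q K x (\<lambda>z. \<exists>u\<in>C. type_sat Qs Phi d K u K z)" for x
    proof (rule diam_cong)
      fix z assume "z \<in> nbrs K x"
      then have "z \<in> verts K" using nbrs_sub[OF K] by blast
      then show "sat K z \<delta> = (\<exists>u\<in>C. type_sat Qs Phi d K u K z)"
        unfolding \<delta>_def disjs_props using g cs by auto
    qed
    have ne': "sat K a (FQ Q \<delta>) \<noteq> sat K b (FQ Q \<delta>)" using ne eq by simp
    show ?thesis
    proof (cases "sat K a (FQ Q \<delta>)")
      case True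
      then show ?thesis using ne' inPL md Q by (intro exI[of _ "FQ Q \<delta>"]) auto
    next
      case False
      then show ?thesis using ne' inPL md Q by (intro exI[of _ "FNeg (FQ Q \<delta>)"]) auto
    qed
  qed
qed

lemma E_imp_T:
  assumes K: "kripke Phi K" and b: "b \<in> verts K"
    and E: "\<forall>\<phi>. in_PL Qs Phi \<phi> \<and> md \<phi> \<le> d \<longrightarrow> sat K a \<phi> = sat K b \<phi>"
  shows "type_sat Qs Phi d K a K b"
proof (rule ccontr)
  assume "\<not> ?thesis"
  from dist[OF K b this] obtain \<psi> where "in_PL Qs Phi \<psi>" "md \<psi> \<le> d" "sat K a \<psi>" "\<not> sat K b \<psi>" by blast
  with E show False by blast
qed


lemma or_elim1: "A \<or> B \<Longrightarrow> \<not> A \<Longrightarrow> B" by blast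

lemma lab_eq: "kripke Phi K \<Longrightarrow> a \<in> verts K \<Longrightarrow> b \<in> verts K \<Longrightarrow>
   (lab K a = lab K b) = atoms_sat Phi K a K b"
  unfolding kripke_def atoms_sat_def by blast

lemma game_T:
  assumes K: "kripke Phi K"
  shows "a \<in> verts K \<Longrightarrow> b \<in> verts K \<Longrightarrow> p2_wins Qs K k a b Player1 = type_sat Qs Phi k K a K b"
proof (induction k arbitrary: a b)
  case 0
  then show ?case using lab_eq[OF K] by simp
next
  case (Suc k)
  note ab = Suc.prems
  let ?T = "\<lambda>p q. type_sat Qs Phi k K p K q"
  have NV: "nbrs K x \<subseteq> verts K" for x using nbrs_sub[OF K] .
  have IH: "p2_wins Qs K k p q Player1 = ?T p q" if "p \<in> verts K" "q \<in> verts K" for p q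
    by (rule Suc.IH[OF that])
  show ?case
  proof
    assume D: "p2_wins Qs K (Suc k) a b Player1"
    note D' = D[unfolded D_Suc]
    have step: "diam Q K y (\<lambda>z. \<exists>u\<in>C. ?T u z)"
      if xy: "(x,y)=(a,b) \<or> (x,y)=(b,a)" and Q: "Q \<in> Qs" and CV: "C \<subseteq> verts K"
        and dx: "diam Q K x (\<lambda>z. \<exists>u\<in>C. ?T u z)" for x y Q C
    proof -
      let ?S = "\<lambda>z. \<exists>u\<in>C. ?T u z"
      define X where "X = {z \<in> nbrs K x. ?S z}"
      have XN: "X \<subseteq> nbrs K x" unfolding X_def by auto
      have gX: "gq_mem Q (nbrs K x) X" using dx unfolding diam_def X_def .
      have S_closed: "?S q" if "?S p" "?T p q" for p q
      proof -
        from that obtain u where "u \<in> C" "?T u p" by blast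
        then show ?thesis using that(2) T_trans[of Qs Phi k K u p q] by blast
      qed
      note G = D'[THEN conjunct2, rule_format, OF conjI[OF xy conjI[OF Q conjI[OF XN gX]]]]
      have nc: "\<not> (\<exists>p\<in>X. \<exists>q\<in>nbrs K x - X. p2_wins Qs K k p q Player1)"
      proof
        assume "\<exists>p\<in>X. \<exists>q\<in>nbrs K x - X. p2_wins Qs K k p q Player1"
        then obtain p q where "p \<in> X" "q \<in> nbrs K x - X" "p2_wins Qs K k p q Player1" by blast
        then show False using IH[of p q] NV S_closed unfolding X_def by blast
      qed
      define P where "P = {z \<in> nbrs K y. ?S z \<and> (\<forall>q\<in>nbrs K x. \<not> ?T z q)}"
      have PN: "P \<subseteq> nbrs K y" unfolding P_def by auto
      have ncP: "\<not> (\<exists>p\<in>P. \<exists>q\<in>nbrs K x. p2_wins Qs K k p q Player1)"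
        using IH NV unfolding P_def by blast
      note G2 = or_elim1[OF or_elim1[OF G nc, rule_format, OF PN] ncP]
      from G2 obtain X' where X'N: "X' \<subseteq> nbrs K y" and gX': "gq_mem Q (nbrs K y) X'"
        and PX': "P \<subseteq> X'"
        and c2: "\<forall>p\<in>nbrs K y - X'. \<forall>q\<in>X. \<not> p2_wins Qs K k p q Player1"
        and c3: "\<forall>p\<in>X'. \<exists>q\<in>X \<union> P. p2_wins Qs K k p q Player1"
        by blast
      have "X' = {z \<in> nbrs K y. ?S z}"
      proof (intro equalityI subsetI)
        fix p assume p: "p \<in> X'"
        then obtain q where q: "q \<in> X \<union> P" "p2_wins Qs K k p q Player1" using c3 by blast
        have qv: "q \<in> verts K" using q(1) XN PN NV by blast
        have pv: "p \<in> verts K" using p X'N NV by blast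
        have "?T p q" using q(2) IH[OF pv qv] by simp
        then have "?T q p" by (rule T_sym)
        moreover have "?S q" using q(1) unfolding X_def P_def by blast
        ultimately show "p \<in> {z \<in> nbrs K y. ?S z}" using p X'N S_closed by blast
      next
        fix z assume z: "z \<in> {z \<in> nbrs K y. ?S z}"
        show "z \<in> X'"
        proof (cases "z \<in> P")
          case True then show ?thesis using PX' by blast
        next
          case False
          then obtain q where q: "q \<in> nbrs K x" "?T z q" using z unfolding P_def by blast
          have "?S q" using z q S_closed by blast
          then have qX: "q \<in> X" using q unfolding X_def by blast
          have zv: "z \<in> verts K" "q \<in> verts K" using z q NV by blast+
          have W: "p2_wins Qs K k z q Player1" using IH[OF zv] q(2) by simp
          show ?thesis
          proof (rule ccontr)
            assume "z \<notin> X'"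
            then have "z \<in> nbrs K y - X'" using z by blast
            then have "\<not> p2_wins Qs K k z q Player1" using c2 qX by blast
            then show False using W by contradiction
          qed
        qed
      qed
      then show ?thesis using gX' unfolding diam_def by simp
    qed
    have "lab K a = lab K b" using D' by (rule conjunct1)
    then have at: "atoms_sat Phi K a K b" using lab_eq[OF K ab] by simp
    show "type_sat Qs Phi (Suc k) K a K b"
      unfolding T_Suc
    proof (intro conjI ballI allI impI iffI)
      show "atoms_sat Phi K a K b" by (rule at)
    next
      fix Q C assume "Q \<in> Qs" "C \<subseteq> verts K" "diam Q K a (\<lambda>z. \<exists>u\<in>C. ?T u z)"
      then show "diam Q K b (\<lambda>z. \<exists>u\<in>C. ?T u z)" using step[of a b Q C] by simp
    next
      fix Q C assume "Q \<in> Qs" "C \<subseteq> verts K" "diam Q K b (\<lambda>z. \<exists>u\<in>C. ?T u z)"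
      then show "diam Q K a (\<lambda>z. \<exists>u\<in>C. ?T u z)" using step[of b a Q C] by simp
    qed
  next
    assume T: "type_sat Qs Phi (Suc k) K a K b"
    show "p2_wins Qs K (Suc k) a b Player1"
      unfolding D_Suc
    proof (intro conjI allI impI)
      show "lab K a = lab K b" using lab_eq[OF K ab] T_atoms[OF T] by simp
      fix x y Q X
      assume H: "((x, y) = (a, b) \<or> (x, y) = (b, a)) \<and> Q \<in> Qs \<and> X \<subseteq> nbrs K x \<and> gq_mem Q (nbrs K x) X"
      then have Q: "Q \<in> Qs" and XN: "X \<subseteq> nbrs K x" and gX: "gq_mem Q (nbrs K x) X" by auto
      have Tba: "type_sat Qs Phi (Suc k) K b K a" using T by (rule T_sym)
      from H have "(x, y) = (a, b) \<or> (x, y) = (b, a)" by blast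
      then have Txy: "type_sat Qs Phi (Suc k) K x K y" using T Tba by auto
      show "(\<exists>p\<in>X. \<exists>q\<in>nbrs K x - X. p2_wins Qs K k p q Player1) \<or>
        (\<forall>P. P \<subseteq> nbrs K y \<longrightarrow> (\<exists>p\<in>P. \<exists>q\<in>nbrs K x. p2_wins Qs K k p q Player1) \<or>
         (\<exists>X'. X' \<subseteq> nbrs K y \<and> gq_mem Q (nbrs K y) X' \<and> P \<subseteq> X' \<and>
           (\<forall>p\<in>X'. \<forall>q\<in>nbrs K y - X'. \<not> p2_wins Qs K k p q Player1) \<and>
           (\<forall>p\<in>nbrs K y - X'. \<forall>q\<in>X. \<not> p2_wins Qs K k p q Player1) \<and>
           (\<forall>p\<in>X'. \<exists>q\<in>X \<union> P. p2_wins Qs K k p q Player1)))"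
      proof (cases "\<exists>p\<in>X. \<exists>q\<in>nbrs K x - X. ?T p q")
        case True
        then obtain p q where "p \<in> X" "q \<in> nbrs K x - X" "?T p q" by blast
        moreover then have "p2_wins Qs K k p q Player1" using IH NV XN by blast
        ultimately show ?thesis by (intro disjI1) blast
      next
        case False
        then have closed: "q \<in> X" if "p \<in> X" "q \<in> nbrs K x" "?T p q" for p q
          using that by blast
        show ?thesis
        proof (rule disjI2, intro allI impI)
          fix P assume PN: "P \<subseteq> nbrs K y"
          show "(\<exists>p\<in>P. \<exists>q\<in>nbrs K x. p2_wins Qs K k p q Player1) \<or>
           (\<exists>X'. X' \<subseteq> nbrs K y \<and> gq_mem Q (nbrs K y) X' \<and> P \<subseteq> X' \<and>
           (\<forall>p\<in>X'. \<forall>q\<in>nbrs K y - X'. \<not> p2_wins Qs K k p q Player1) \<and>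
           (\<forall>p\<in>nbrs K y - X'. \<forall>q\<in>X. \<not> p2_wins Qs K k p q Player1) \<and>
           (\<forall>p\<in>X'. \<exists>q\<in>X \<union> P. p2_wins Qs K k p q Player1))"
          proof (cases "\<exists>p\<in>P. \<exists>q\<in>nbrs K x. ?T p q")
            case True
            then obtain p q where "p \<in> P" "q \<in> nbrs K x" "?T p q" by blast
            moreover then have "p2_wins Qs K k p q Player1" using IH NV PN by blast
            ultimately show ?thesis by (intro disjI1) blast
          next
            case False
            define C where "C = X \<union> P"
            let ?S = "\<lambda>z. \<exists>u\<in>C. ?T u z"
            define X' where "X' = {z \<in> nbrs K y. ?S z}"
            have CV: "C \<subseteq> verts K" unfolding C_def using XN PN NV by blast
            have setx: "{z \<in> nbrs K x. ?S z} = X"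
            proof (intro equalityI subsetI)
              fix z assume z: "z \<in> {z \<in> nbrs K x. ?S z}"
              then obtain u where u: "u \<in> C" "?T u z" by blast
              show "z \<in> X"
              proof (cases "u \<in> X")
                case True then show ?thesis using closed u z by blast
              next
                case False then have "u \<in> P" using u C_def by blast
                then show ?thesis using \<open>\<not> (\<exists>p\<in>P. \<exists>q\<in>nbrs K x. ?T p q)\<close> u z by blast
              qed
            next
              fix z assume "z \<in> X" then show "z \<in> {z \<in> nbrs K x. ?S z}"
                using XN T_refl[of Qs Phi k K z] unfolding C_def by blast
            qed
            have "diam Q K x ?S" unfolding diam_def setx by (rule gX)
            then have "diam Q K y ?S" using Txy Q CV unfolding T_Suc by blast
            then have gX': "gq_mem Q (nbrs K y) X'" unfolding diam_def X'_def .
            have X'N: "X' \<subseteq> nbrs K y" unfolding X'_def by blast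
            have "X' \<subseteq> nbrs K y \<and> gq_mem Q (nbrs K y) X' \<and> P \<subseteq> X' \<and>
              (\<forall>p\<in>X'. \<forall>q\<in>nbrs K y - X'. \<not> p2_wins Qs K k p q Player1) \<and>
              (\<forall>p\<in>nbrs K y - X'. \<forall>q\<in>X. \<not> p2_wins Qs K k p q Player1) \<and>
              (\<forall>p\<in>X'. \<exists>q\<in>X \<union> P. p2_wins Qs K k p q Player1)"
            proof (intro conjI ballI)
              show "X' \<subseteq> nbrs K y" by (rule X'N)
              show "gq_mem Q (nbrs K y) X'" by (rule gX')
              show "P \<subseteq> X'" unfolding X'_def C_def using PN T_refl[of Qs Phi k K] by blast
            next
              fix p q assume p: "p \<in> X'" and q: "q \<in> nbrs K y - X'"
              show "\<not> p2_wins Qs K k p q Player1"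
              proof
                assume "p2_wins Qs K k p q Player1"
                then have Tpq: "?T p q" using IH p q X'N NV by blast
                from p obtain u where u: "u \<in> C" "?T u p" unfolding X'_def by blast
                have "?T u q" using T_trans[OF u(2) Tpq] .
                then show False using p q u(1) unfolding X'_def by blast
              qed
            next
              fix p q assume p: "p \<in> nbrs K y - X'" and q: "q \<in> X"
              show "\<not> p2_wins Qs K k p q Player1"
              proof
                assume "p2_wins Qs K k p q Player1"
                then have "?T p q" using IH p q XN NV by blast
                then have "?T q p" by (rule T_sym)
                then show False using p q unfolding X'_def C_def by blast
              qed
            next
              fix p assume p: "p \<in> X'"
              then obtain u where u: "u \<in> C" "?T u p" unfolding X'_def by blast
              have "?T p u" using u(2) by (rule T_sym)
              moreover have "p \<in> verts K" "u \<in> verts K" using p u X'N NV CV by blast+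
              ultimately show "\<exists>q\<in>X \<union> P. p2_wins Qs K k p q Player1"
                using u IH unfolding C_def by blast
            qed
            then show ?thesis by blast
          qed
        qed
      qed
    qed
  qed
qed

lemma nbrs_Inl: "nbrs (dunion M N) (Inl x) = Inl ` nbrs M x"
  by (auto simp: nbrs_def dunion_def)
lemma nbrs_Inr: "nbrs (dunion M N) (Inr x) = Inr ` nbrs N x"
  by (auto simp: nbrs_def dunion_def)
lemma lab_Inl[simp]: "lab (dunion M N) (Inl x) = lab M x" by (simp add: dunion_def)
lemma lab_Inr[simp]: "lab (dunion M N) (Inr x) = lab N x" by (simp add: dunion_def)
lemma verts_dunion: "verts (dunion M N) = Inl ` verts M \<union> Inr ` verts N" by (simp add: dunion_def)

lemma gq_mem_inj:
  assumes g: "inj g" and PD: "P \<subseteq> D" shows "gq_mem Q (g ` D) (g ` P) = gq_mem Q D P"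
proof
  assume "gq_mem Q (g ` D) (g ` P)"
  then obtain f D' P' where f: "(D', P') \<in> Q" "bij_betw f (g ` D) D'" "f ` (g ` P) = P'"
    unfolding gq_mem_def by blast
  have gb: "bij_betw g D (g ` D)" using g by (simp add: bij_betw_def inj_on_def inj_def)
  have "bij_betw (f \<circ> g) D D'" by (rule bij_betw_trans[OF gb f(2)])
  moreover have "(f \<circ> g) ` P = P'" using f(3) by (simp add: image_comp)
  ultimately show "gq_mem Q D P" using f(1) unfolding gq_mem_def by blast
next
  assume "gq_mem Q D P"
  then obtain f D' P' where f: "(D', P') \<in> Q" "bij_betw f D D'" "f ` P = P'"
    unfolding gq_mem_def by blast
  have gb: "bij_betw g D (g ` D)" using g by (simp add: bij_betw_def inj_on_def inj_def)
  have "bij_betw (inv_into D g) (g ` D) D" by (rule bij_betw_inv_into[OF gb])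
  then have "bij_betw (f \<circ> inv_into D g) (g ` D) D'" using f(2) by (rule bij_betw_trans)
  moreover have "(f \<circ> inv_into D g) ` (g ` P) = P'"
  proof -
    have "inv_into D g ` g ` P = P"
    proof -
      have "inj_on g D" using gb by (simp add: bij_betw_def)
      then have "\<And>p. p \<in> P \<Longrightarrow> inv_into D g (g p) = p" using PD by (simp add: inv_into_f_f subset_iff)
      then show ?thesis by (force simp: image_comp)
    qed
    have "(f \<circ> inv_into D g) ` (g ` P) = f ` (inv_into D g ` g ` P)" by (simp add: image_image)
    then show ?thesis using f(3) \<open>inv_into D g ` g ` P = P\<close> by simp
  qed
  ultimately show "gq_mem Q (g ` D) (g ` P)" using f(1) unfolding gq_mem_def by blast
qed

lemma diam_Inl: "diam Q (dunion M N) (Inl x) S = diam Q M x (\<lambda>z. S (Inl z))"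
proof -
  have "{u' \<in> Inl ` nbrs M x. S u'} = Inl ` {z \<in> nbrs M x. S (Inl z)}" by auto
  then show ?thesis unfolding diam_def nbrs_Inl by (simp add: gq_mem_inj[where D="nbrs M x"])
qed
lemma diam_Inr: "diam Q (dunion M N) (Inr x) S = diam Q N x (\<lambda>z. S (Inr z))"
proof -
  have "{u' \<in> Inr ` nbrs N x. S u'} = Inr ` {z \<in> nbrs N x. S (Inr z)}" by auto
  then show ?thesis unfolding diam_def nbrs_Inr by (simp add: gq_mem_inj[where D="nbrs N x"])
qed

lemma sat_Inl: "sat (dunion M N) (Inl x) \<phi> = sat M x \<phi>"
  by (induction \<phi> arbitrary: x) (simp_all add: diam_Inl)
lemma sat_Inr: "sat (dunion M N) (Inr x) \<phi> = sat N x \<phi>"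
  by (induction \<phi> arbitrary: x) (simp_all add: diam_Inr)

lemma type_sat_Inr: "type_sat Qs Phi d K u (dunion M N) (Inr v) = type_sat Qs Phi d K u N v"
  by (induction d arbitrary: u v) (simp_all add: type_step_def atoms_sat_def diam_Inr)

lemma kripke_dunion: "kripke Phi M \<Longrightarrow> kripke Phi N \<Longrightarrow> kripke Phi (dunion M N)"
  unfolding kripke_def dunion_def by (auto simp: subset_iff)


theorem theorem4p2:
  fixes Qs :: "gq set" and Phi :: "'p set" and d :: nat
    and M :: "('v, 'p) kripke" and w :: 'v
    and N :: "('w, 'p) kripke" and v :: 'w
  assumes "\<forall>Q\<in>Qs. is_gq Q"
    and "finite Phi"
    and "kripke Phi M" and "kripke Phi N"
    and "w \<in> verts M" and "v \<in> verts N"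
  shows "(bisim_game Qs d M w N v \<longleftrightarrow> PL_equiv Qs Phi d M w N v) \<and>
         (PL_equiv Qs Phi d M w N v \<longleftrightarrow> type_sat Qs Phi d (dunion M N) (Inl w) N v)"
proof -
  let ?K = "dunion M N"
  have K: "kripke Phi ?K" using assms(3,4) by (rule kripke_dunion)
  have w': "Inl w \<in> verts ?K" using assms(5) by (simp add: verts_dunion)
  have v': "Inr v \<in> verts ?K" using assms(6) by (simp add: verts_dunion)
  have G: "bisim_game Qs d M w N v = type_sat Qs Phi d ?K (Inl w) ?K (Inr v)"
    unfolding bisim_game_def by (rule game_T[OF K w' v'])
  have P: "PL_equiv Qs Phi d M w N v = type_sat Qs Phi d ?K (Inl w) ?K (Inr v)"
  proof
    assume E: "PL_equiv Qs Phi d M w N v"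
    have "\<forall>\<phi>. in_PL Qs Phi \<phi> \<and> md \<phi> \<le> d \<longrightarrow> sat ?K (Inl w) \<phi> = sat ?K (Inr v) \<phi>"
      using E unfolding PL_equiv_def by (simp add: sat_Inl sat_Inr)
    then show "type_sat Qs Phi d ?K (Inl w) ?K (Inr v)" by (rule E_imp_T[OF K v'])
  next
    assume T: "type_sat Qs Phi d ?K (Inl w) ?K (Inr v)"
    show "PL_equiv Qs Phi d M w N v" unfolding PL_equiv_def
    proof (intro allI impI)
      fix \<phi> assume "in_PL Qs Phi \<phi> \<and> md \<phi> \<le> d"
      then have "sat ?K (Inl w) \<phi> = sat ?K (Inr v) \<phi>" using T_imp_E[OF K T] by blast
      then show "sat M w \<phi> = sat N v \<phi>" by (simp add: sat_Inl sat_Inr)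
    qed
  qed
  have TT: "type_sat Qs Phi d ?K (Inl w) N v = type_sat Qs Phi d ?K (Inl w) ?K (Inr v)"
    by (simp add: type_sat_Inr)
  show ?thesis using G P TT by simp
qed

end
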